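(* Let $\boldsymbol\alpha$ be a fixed static allocation in the setting described in the context. Then $$\mathrm{LDR}_{\mathrm{FS}}:=\liminf_{n\to\infty}-\frac1n\log\mathrm{P}\left(i^*_n\neq\{i^*\}\right)\;\ge\;\min_{j\ne i^*}\mathrm{LDR}_{j,i^*},\qquad\text{where } \mathrm{LDR}_{j,i^*}:=\min_{\mathbf M\in\mathcal A_j}\sum_{(i,\theta_b)\in I(\mathbf M)}G_i(\theta_b).$$
   Context: There are $k\ge2$ solutions and $B$ parameter values $\theta_1,\dots,\theta_B$ with probabilities $p_1,\dots,p_B\ge0$, $\sum_bp_b=1$. For each $i,b$, $y_i(\theta_b)\in\mathbb R$ is the mean simulation output of solution $i$ at $\theta_b$. For each $b$, $i^b=\arg\min_iy_i(\theta_b)$ is assumed unique, and the most probable best $i^*=\arg\max_{1\le i\le k}\sum_bp_b\mathbf 1\{i=i^b\}$ is assumed unique. Simulation outputs at $(i,\theta_b)$ are i.i.d. $N(y_i(\theta_b),\lambda_i^2(\theta_b))$ with known $\lambda_i(\theta_b)>0$, independent across pairs. A static allocation is $\boldsymbol\alpha$ with $\alpha_i(\theta_b)\ge0$, $\sum_{i,b}\alpha_i(\theta_b)=1$; after total budget $n$, pair $(i,\theta_b)$ has $N_i^n(\theta_b)$ replications with $N_i^n(\theta_b)/n\to\alpha_i(\theta_b)$ and $N_i^n(\theta_b)\to\infty$. Let $\mu_{i,n}(\theta_b)$ be the sample mean at $(i,\theta_b)$, $i^b_n=\arg\min_i\mu_{i,n}(\theta_b)$, and $i^*_n$ the set of maximizers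 of $i\mapsto\sum_bp_b\mathbf 1\{i=i^b_n\}$ (so a tie counts as $i^*_n\ne\{i^*\}$). Let $\mathcal M=\{\mathbf M\in\{0,1\}^{k\times B}:\mathbf M^\top\mathbf 1_k=\mathbf 1_B\}$ with entries $m_{i,b}$. For $\mathbf M\in\mathcal M$ define $d_j(\mathbf M)=\sum_bp_bm_{i^*,b}-\sum_bp_bm_{j,b}$, $I(\mathbf M)=\{(i,\theta_b):m_{i,b}=1,i\ne i^b\}$, and for $j\ne i^*$, $\mathcal A_j=\{\mathbf M\in\mathcal M:d_j(\mathbf M)\le0\}$. For $i\ne i^b$, $$G_i(\theta_b)=\frac{(y_i(\theta_b)-y_{i^b}(\theta_b))^2}{2\left(\lambda_i^2(\theta_b)/\alpha_i(\theta_b)+\lambda_{i^b}^2(\theta_b)/\alpha_{i^b}(\theta_b)\right)},$$ with $G_i(\theta_b)=0$ if $\alpha_i(\theta_b)=0$ or $\alpha_{i^b}(\theta_b)=0$. *)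

theory Defs
  imports "HOL-Probability.Probability"
begin

text \<open>Solutions are indexed by i < k, parameter values by b < B.
  A matrix M in the set calM is a 0/1 matrix (entries m_{i,b} = of_bool (M i b)) supported on
  {..<k} x {..<B} with exactly one 1 in every column b < B.\<close>

definition calM :: "nat \<Rightarrow> nat \<Rightarrow> (nat \<Rightarrow> nat \<Rightarrow> bool) set" where
  "calM k B = {M. (\<forall>i b. M i b \<longrightarrow> i < k \<and> b < B) \<and> (\<forall>b<B. \<exists>!i. i < k \<and> M i b)}"

definition dgap :: "(nat \<Rightarrow> real) \<Rightarrow> nat \<Rightarrow> nat \<Rightarrow> nat \<Rightarrow> (nat \<Rightarrow> nat \<Rightarrow> bool) \<Rightarrow> real" where
  "dgap p B istar j M = (\<Sum>b<B. p b * of_bool (M istar b)) - (\<Sum>b<B. p b * of_bool (M j b))"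

definition calA :: "nat \<Rightarrow> nat \<Rightarrow> (nat \<Rightarrow> real) \<Rightarrow> nat \<Rightarrow> nat \<Rightarrow> (nat \<Rightarrow> nat \<Rightarrow> bool) set" where
  "calA k B p istar j = {M \<in> calM k B. dgap p B istar j M \<le> 0}"

text \<open>I(M), given the true best solutions ib b (= i^b).\<close>
definition Iset :: "nat \<Rightarrow> nat \<Rightarrow> (nat \<Rightarrow> nat) \<Rightarrow> (nat \<Rightarrow> nat \<Rightarrow> bool) \<Rightarrow> (nat \<times> nat) set" where
  "Iset k B ib M = {(i, b). i < k \<and> b < B \<and> M i b \<and> i \<noteq> ib b}"

definition Grate :: "(nat \<Rightarrow> nat \<Rightarrow> real) \<Rightarrow> (nat \<Rightarrow> nat \<Rightarrow> real) \<Rightarrow> (nat \<Rightarrow> nat \<Rightarrow> real)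
    \<Rightarrow> (nat \<Rightarrow> nat) \<Rightarrow> nat \<Rightarrow> nat \<Rightarrow> real" where
  "Grate y lam alpha ib i b =
     (if alpha i b = 0 \<or> alpha (ib b) b = 0 then 0
      else (y i b - y (ib b) b)\<^sup>2 /
           (2 * ((lam i b)\<^sup>2 / alpha i b + (lam (ib b) b)\<^sup>2 / alpha (ib b) b)))"

definition LDRj :: "nat \<Rightarrow> nat \<Rightarrow> (nat \<Rightarrow> real) \<Rightarrow> (nat \<Rightarrow> nat \<Rightarrow> real) \<Rightarrow> (nat \<Rightarrow> nat \<Rightarrow> real)
    \<Rightarrow> (nat \<Rightarrow> nat \<Rightarrow> real) \<Rightarrow> (nat \<Rightarrow> nat) \<Rightarrow> nat \<Rightarrow> nat \<Rightarrow> real" where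
  "LDRj k B p y lam alpha ib istar j =
     Min ((\<lambda>M. \<Sum>(i, b)\<in>Iset k B ib M. Grate y lam alpha ib i b) ` calA k B p istar j)"

text \<open>Empirical best at parameter b: the index i < k minimising the sample mean
  (ties, a null event, broken towards the smallest index).\<close>
definition emp_best :: "nat \<Rightarrow> (nat \<Rightarrow> real) \<Rightarrow> nat" where
  "emp_best k mu = (LEAST i. i < k \<and> (\<forall>j<k. mu i \<le> mu j))"

definition emp_mpb :: "nat \<Rightarrow> nat \<Rightarrow> (nat \<Rightarrow> real) \<Rightarrow> (nat \<Rightarrow> nat \<Rightarrow> real) \<Rightarrow> nat set" where
  "emp_mpb k B p mu =
     {i. i < k \<and> (\<forall>j<k. (\<Sum>b<B. p b * of_bool (j = emp_best k (\<lambda>l. mu l b)))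
                       \<le> (\<Sum>b<B. p b * of_bool (i = emp_best k (\<lambda>l. mu l b))))}"

definition sample_mean :: "nat \<Rightarrow> (nat \<Rightarrow> real) \<Rightarrow> real" where
  "sample_mean N X = (\<Sum>r<N. X r) / real N"

definition exp_rate :: "nat \<Rightarrow> real \<Rightarrow> ereal" where
  "exp_rate n P = (if P = 0 then \<infinity> else ereal (- ln P / real n))"

end

theory Submission
  imports Defs
begin

lemma normal_mgf_pw:
  fixes \<sigma> :: real assumes "\<sigma> > 0"
  shows "normal_density \<mu> \<sigma> x * exp (c*x) = exp(c*\<mu> + c^2*\<sigma>^2/2) * normal_density (\<mu> + c*\<sigma>^2) \<sigma> x"
proof -
  have "-(x - \<mu>)\<^sup>2/ (2 * \<sigma>\<^sup>2) + c*x = (c*\<mu> + c^2*\<sigma>^2/2) + (-(x - (\<mu> + c*\<sigma>^2))\<^sup>2/ (2 * \<sigma>\<^sup>2))"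
    using assms by (simp add: field_simps power2_eq_square)
  then show ?thesis unfolding normal_density_def
    by (simp add: exp_add[symmetric])
qed

lemma normal_mgf:
  fixes \<sigma> :: real assumes "\<sigma> > 0" and P: "prob_space M"
    and D: "distributed M lborel X (normal_density \<mu> \<sigma>)"
  shows "integrable M (\<lambda>\<omega>. exp (c * X \<omega>))" "(\<integral>\<omega>. exp (c * X \<omega>) \<partial>M) = exp(c*\<mu> + c^2*\<sigma>^2/2)"
proof -
  have eq: "(\<lambda>x. normal_density \<mu> \<sigma> x * exp (c*x)) = (\<lambda>x. exp(c*\<mu> + c^2*\<sigma>^2/2) * normal_density (\<mu> + c*\<sigma>^2) \<sigma> x)"
    using normal_mgf_pw[OF assms(1)] by auto
  have "integrable lborel (\<lambda>x. normal_density \<mu> \<sigma> x * exp (c*x))"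
    unfolding eq using assms(1) by (intro integrable_mult_right integrable_normal_density)
  then show "integrable M (\<lambda>\<omega>. exp (c * X \<omega>))"
    using distributed_integrable[OF D, of "\<lambda>x. exp (c*x)"] by simp
  have "(\<integral>x. normal_density \<mu> \<sigma> x * exp (c*x) \<partial>lborel) = exp(c*\<mu> + c^2*\<sigma>^2/2)"
    unfolding eq using assms(1) by simp
  then show "(\<integral>\<omega>. exp (c * X \<omega>) \<partial>M) = exp(c*\<mu> + c^2*\<sigma>^2/2)"
    using distributed_integral[OF D, of "\<lambda>x. exp (c*x)"] by simp
qed

lemma sum_if_less:
  fixes f :: "nat \<Rightarrow> real"
  assumes "N \<le> R" shows "(\<Sum>r<R. if r < N then f r else 0) = (\<Sum>r<N. f r)"
proof -
  have "(\<Sum>r<R. if r < N then f r else 0) = (\<Sum>r\<in>{..<R} \<inter> {r. r < N}. f r)"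
    by (simp add: sum.inter_restrict)
  also have "{..<R} \<inter> {r. r < N} = {..<N}" using assms by auto
  finally show ?thesis .
qed

lemma sum_two_delta:
  fixes F :: "nat \<Rightarrow> real"
  assumes "u < k" "v < k" "u \<noteq> v"
  shows "(\<Sum>i<k. (if i = u then x else if i = v then z else 0) * F i) = x * F u + z * F v"
proof -
  have "(\<Sum>i<k. (if i = u then x else if i = v then z else 0) * F i)
      = (\<Sum>i<k. (if i = u then x * F u else 0) + (if i = v then z * F v else 0))"
    using assms by (intro sum.cong) auto
  also have "\<dots> = x * F u + z * F v" using assms by (simp add: sum.distrib)
  finally show ?thesis .
qed

lemma sum_T_general:
  fixes g :: "nat \<Rightarrow> nat \<Rightarrow> nat \<Rightarrow> real" and phi :: "real \<Rightarrow> real"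
    and Nn :: "nat \<Rightarrow> nat \<Rightarrow> nat" and a :: "nat \<Rightarrow> nat \<Rightarrow> real"
  assumes NR: "\<forall>i<k. \<forall>b<B. Nn i b \<le> R" and phi0: "phi 0 = 0"
  shows "(\<Sum>t\<in>{..<k} \<times> {..<B} \<times> {..<R}.
            phi ((\<lambda>(i,b,r). if r < Nn i b then a i b / Nn i b else 0) t) * (\<lambda>(i,b,r). g i b r) t)
       = (\<Sum>i<k. \<Sum>b<B. phi (a i b / Nn i b) * (\<Sum>r<Nn i b. g i b r))"
proof -
  have "(\<Sum>t\<in>{..<k} \<times> {..<B} \<times> {..<R}.
            phi ((\<lambda>(i,b,r). if r < Nn i b then a i b / Nn i b else 0) t) * (\<lambda>(i,b,r). g i b r) t)
       = (\<Sum>i<k. \<Sum>b<B. \<Sum>r<R. phi (if r < Nn i b then a i b / Nn i b else 0) * g i b r)"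
    by (simp add: sum.cartesian_product split_beta)
  also have "\<dots> = (\<Sum>i<k. \<Sum>b<B. \<Sum>r<R. if r < Nn i b then phi (a i b / Nn i b) * g i b r else 0)"
    using phi0 by (intro sum.cong refl) auto
  also have "\<dots> = (\<Sum>i<k. \<Sum>b<B. \<Sum>r<Nn i b. phi (a i b / Nn i b) * g i b r)"
    using NR by (intro sum.cong refl sum_if_less) auto
  also have "\<dots> = (\<Sum>i<k. \<Sum>b<B. phi (a i b / Nn i b) * (\<Sum>r<Nn i b. g i b r))"
    by (simp add: sum_distrib_left)
  finally show ?thesis .
qed

lemma sum_two_delta_gen:
  fixes H :: "nat \<Rightarrow> real \<Rightarrow> real"
  assumes "u < k" "v < k" "u \<noteq> v" "\<And>i. H i 0 = 0"
  shows "(\<Sum>i<k. H i (if i = u then x else if i = v then z else 0)) = H u x + H v z"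
proof -
  have "(\<Sum>i<k. H i (if i = u then x else if i = v then z else 0))
      = (\<Sum>i<k. (if i = u then H u x else 0) + (if i = v then H v z else 0))"
    using assms by (intro sum.cong) auto
  also have "\<dots> = H u x + H v z" using assms by (simp add: sum.distrib)
  finally show ?thesis .
qed

lemma sum_Bs:
  fixes H :: "nat \<Rightarrow> nat \<Rightarrow> real \<Rightarrow> real" and sel ib :: "nat \<Rightarrow> nat" and s :: "nat \<Rightarrow> real"
  assumes Bs: "Bs \<subseteq> {..<B}" and sel: "\<forall>b\<in>Bs. sel b < k \<and> ib b < k \<and> sel b \<noteq> ib b"
    and H0: "\<And>i b. H i b 0 = 0"
  shows "(\<Sum>i<k. \<Sum>b<B. H i b (if b \<in> Bs then (if i = sel b then - s b else if i = ib b then s b else 0) else 0))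
    = (\<Sum>b\<in>Bs. H (sel b) b (- s b) + H (ib b) b (s b))"
proof -
  have "(\<Sum>i<k. \<Sum>b<B. H i b (if b \<in> Bs then (if i = sel b then - s b else if i = ib b then s b else 0) else 0))
     = (\<Sum>b<B. \<Sum>i<k. H i b (if b \<in> Bs then (if i = sel b then - s b else if i = ib b then s b else 0) else 0))"
    by (rule sum.swap)
  also have "\<dots> = (\<Sum>b<B. if b \<in> Bs then H (sel b) b (- s b) + H (ib b) b (s b) else 0)"
  proof (intro sum.cong refl)
    fix b assume "b \<in> {..<B}"
    show "(\<Sum>i<k. H i b (if b \<in> Bs then (if i = sel b then - s b else if i = ib b then s b else 0) else 0))
        = (if b \<in> Bs then H (sel b) b (- s b) + H (ib b) b (s b) else 0)"
    proof (cases "b \<in> Bs")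
      case True
      then show ?thesis using sel H0 sum_two_delta_gen[of "sel b" k "ib b" "\<lambda>i. H i b"] by auto
    next
      case False
      then show ?thesis using H0 by simp
    qed
  qed
  also have "\<dots> = (\<Sum>b\<in>Bs. H (sel b) b (- s b) + H (ib b) b (s b))"
    using Bs by (simp add: sum.If_cases Int_absorb1)
  finally show ?thesis .
qed

lemma chernoff:
  fixes M :: "'a measure" and X :: "nat \<Rightarrow> nat \<Rightarrow> nat \<Rightarrow> 'a \<Rightarrow> real" and Nn :: "nat \<Rightarrow> nat \<Rightarrow> nat"
    and y lam :: "nat \<Rightarrow> nat \<Rightarrow> real" and s :: "nat \<Rightarrow> real" and sel ib :: "nat \<Rightarrow> nat"
  assumes P: "prob_space M"
   and lam_pos: "\<forall>i<k. \<forall>b<B. lam i b > 0"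
   and X_distr: "\<forall>i<k. \<forall>b<B. \<forall>r. distributed M lborel (X i b r) (normal_density (y i b) (lam i b))"
   and X_indep: "prob_space.indep_vars M (\<lambda>_. borel) (\<lambda>(i, b, r). X i b r) ({..<k} \<times> {..<B} \<times> UNIV)"
   and Npos: "\<forall>i<k. \<forall>b<B. 0 < Nn i b" and NR: "\<forall>i<k. \<forall>b<B. Nn i b \<le> R"
   and Bs: "Bs \<subseteq> {..<B}" and sel: "\<forall>b\<in>Bs. sel b < k \<and> ib b < k \<and> sel b \<noteq> ib b"
   and s: "\<forall>b\<in>Bs. 0 \<le> s b"
  shows "measure M {\<omega>\<in>space M. \<forall>b\<in>Bs. sample_mean (Nn (sel b) b) (\<lambda>r. X (sel b) b r \<omega>)
                                     \<le> sample_mean (Nn (ib b) b) (\<lambda>r. X (ib b) b r \<omega>)}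
     \<le> exp (\<Sum>b\<in>Bs. s b * (y (ib b) b - y (sel b) b)
             + (s b)^2 * ((lam (sel b) b)^2 / Nn (sel b) b + (lam (ib b) b)^2 / Nn (ib b) b) / 2)"
proof -
  interpret prob_space M by (rule P)
  define a where "a i b = (if b \<in> Bs then (if i = sel b then - s b else if i = ib b then s b else 0) else 0)" for i b
  define c where "c = (\<lambda>(i,b,r). if r < Nn i b then a i b / Nn i b else 0)"
  define T where "T = {..<k} \<times> {..<B} \<times> {..<R}"
  define Xt where "Xt = (\<lambda>(i,b,r). X i b r)"
  define Y where "Y t \<omega> = exp (c t * Xt t \<omega>)" for t \<omega>
  define E where "E = {\<omega>\<in>space M. \<forall>b\<in>Bs. sample_mean (Nn (sel b) b) (\<lambda>r. X (sel b) b r \<omega>)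
                                     \<le> sample_mean (Nn (ib b) b) (\<lambda>r. X (ib b) b r \<omega>)}"
  have fin: "finite T" unfolding T_def by auto
  have meas: "X i b r \<in> borel_measurable M" if "i < k" "b < B" for i b r
    using X_distr that distributed_measurable by (metis measurable_lborel1)
  have indX: "indep_vars (\<lambda>_. borel) Xt T"
    unfolding T_def by (rule indep_vars_subset[OF X_indep[unfolded Xt_def[symmetric]]]) auto
  have indY: "indep_vars (\<lambda>_. borel) Y T"
    using indep_vars_compose2[OF indX, of "\<lambda>t x. exp (c t * x)" "\<lambda>_. borel"]
    unfolding Y_def by auto
  have mgf: "integrable M (Y t) \<and> (\<integral>\<omega>. Y t \<omega> \<partial>M)
      = exp (c t * (\<lambda>(i,b,r). y i b) t + (c t)^2 * ((\<lambda>(i,b,r). lam i b) t)^2/2)" if "t \<in> T" for t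
  proof -
    obtain i b r where t: "t = (i,b,r)" by (cases t) auto
    with that have ib: "i < k" "b < B" unfolding T_def by auto
    have D: "distributed M lborel (X i b r) (normal_density (y i b) (lam i b))" using X_distr ib by auto
    have lp: "lam i b > 0" using lam_pos ib by auto
    show ?thesis using normal_mgf[OF lp P D, of "c t"] unfolding t Y_def Xt_def by simp
  qed
  have sumX: "(\<Sum>t\<in>T. c t * Xt t \<omega>) = (\<Sum>b\<in>Bs. s b * (sample_mean (Nn (ib b) b) (\<lambda>r. X (ib b) b r \<omega>)
             - sample_mean (Nn (sel b) b) (\<lambda>r. X (sel b) b r \<omega>)))" for \<omega>
  proof -
    have "(\<Sum>t\<in>T. c t * Xt t \<omega>) = (\<Sum>i<k. \<Sum>b<B. (a i b / Nn i b) * (\<Sum>r<Nn i b. X i b r \<omega>))"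
      using sum_T_general[OF NR, of "\<lambda>x. x" a "\<lambda>i b r. X i b r \<omega>"]
      unfolding T_def c_def Xt_def by (simp add: split_beta)
    also have "\<dots> = (\<Sum>b\<in>Bs. (- s b) / Nn (sel b) b * (\<Sum>r<Nn (sel b) b. X (sel b) b r \<omega>)
                     + s b / Nn (ib b) b * (\<Sum>r<Nn (ib b) b. X (ib b) b r \<omega>))"
      unfolding a_def
      by (rule sum_Bs[OF Bs sel, of "\<lambda>i b v. v / Nn i b * (\<Sum>r<Nn i b. X i b r \<omega>)"]) simp
    also have "\<dots> = (\<Sum>b\<in>Bs. s b * (sample_mean (Nn (ib b) b) (\<lambda>r. X (ib b) b r \<omega>)
             - sample_mean (Nn (sel b) b) (\<lambda>r. X (sel b) b r \<omega>)))"
      by (intro sum.cong refl) (simp add: sample_mean_def field_simps)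
    finally show ?thesis .
  qed
  have sumY: "(\<Sum>t\<in>T. c t * (\<lambda>(i,b,r). y i b) t + (c t)^2 * ((\<lambda>(i,b,r). lam i b) t)^2/2)
     = (\<Sum>b\<in>Bs. s b * (y (ib b) b - y (sel b) b)
             + (s b)^2 * ((lam (sel b) b)^2 / Nn (sel b) b + (lam (ib b) b)^2 / Nn (ib b) b) / 2)"
  proof -
    have "(\<Sum>t\<in>T. c t * (\<lambda>(i,b,r). y i b) t + (c t)^2 * ((\<lambda>(i,b,r). lam i b) t)^2/2)
       = (\<Sum>t\<in>T. c t * (\<lambda>(i,b,r). y i b) t) + (\<Sum>t\<in>T. (c t)^2 * (\<lambda>(i,b,r). (lam i b)^2/2) t)"
      by (simp add: sum.distrib split_beta)
    also have "\<dots> = (\<Sum>i<k. \<Sum>b<B. (a i b / Nn i b) * (\<Sum>r<Nn i b. y i b))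
        + (\<Sum>i<k. \<Sum>b<B. (a i b / Nn i b)^2 * (\<Sum>r<Nn i b. (lam i b)^2/2))"
      using sum_T_general[OF NR, of "\<lambda>x. x" a "\<lambda>i b r. y i b"]
        sum_T_general[OF NR, of "\<lambda>x. x^2" a "\<lambda>i b r. (lam i b)^2/2"]
      unfolding T_def c_def by simp
    also have "\<dots> = (\<Sum>i<k. \<Sum>b<B. (a i b / Nn i b) * (\<Sum>r<Nn i b. y i b)
         + (a i b / Nn i b)^2 * (\<Sum>r<Nn i b. (lam i b)^2/2))"
      by (simp add: sum.distrib)
    also have "\<dots> = (\<Sum>b\<in>Bs. ((- s b) / Nn (sel b) b * (\<Sum>r<Nn (sel b) b. y (sel b) b)
         + ((- s b) / Nn (sel b) b)^2 * (\<Sum>r<Nn (sel b) b. (lam (sel b) b)^2/2))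
         + (s b / Nn (ib b) b * (\<Sum>r<Nn (ib b) b. y (ib b) b)
         + (s b / Nn (ib b) b)^2 * (\<Sum>r<Nn (ib b) b. (lam (ib b) b)^2/2)))"
      unfolding a_def
      by (rule sum_Bs[OF Bs sel, of "\<lambda>i b v. v / Nn i b * (\<Sum>r<Nn i b. y i b) + (v / Nn i b)^2 * (\<Sum>r<Nn i b. (lam i b)^2/2)"]) simp
    also have "\<dots> = (\<Sum>b\<in>Bs. s b * (y (ib b) b - y (sel b) b)
             + (s b)^2 * ((lam (sel b) b)^2 / Nn (sel b) b + (lam (ib b) b)^2 / Nn (ib b) b) / 2)"
    proof (intro sum.cong refl)
      fix b assume "b \<in> Bs"
      then have "Nn (sel b) b > 0" "Nn (ib b) b > 0" using Npos sel Bs by auto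
      then show "((- s b) / Nn (sel b) b * (\<Sum>r<Nn (sel b) b. y (sel b) b)
         + ((- s b) / Nn (sel b) b)^2 * (\<Sum>r<Nn (sel b) b. (lam (sel b) b)^2/2))
         + (s b / Nn (ib b) b * (\<Sum>r<Nn (ib b) b. y (ib b) b)
         + (s b / Nn (ib b) b)^2 * (\<Sum>r<Nn (ib b) b. (lam (ib b) b)^2/2))
         = s b * (y (ib b) b - y (sel b) b)
             + (s b)^2 * ((lam (sel b) b)^2 / Nn (sel b) b + (lam (ib b) b)^2 / Nn (ib b) b) / 2"
        by (simp add: field_simps power2_eq_square)
    qed
    finally show ?thesis .
  qed
  have Emeas: "E \<in> sets M"
  proof -
    have "{\<omega> \<in> space M. sample_mean (Nn (sel b) b) (\<lambda>r. X (sel b) b r \<omega>)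
                                     \<le> sample_mean (Nn (ib b) b) (\<lambda>r. X (ib b) b r \<omega>)} \<in> sets M"
      if "b \<in> Bs" for b
    proof -
      have m1: "X (sel b) b r \<in> borel_measurable M" "X (ib b) b r \<in> borel_measurable M" for r
        using meas sel Bs that by auto
      show ?thesis unfolding sample_mean_def
        by (intro borel_measurable_le borel_measurable_divide borel_measurable_sum m1 borel_measurable_const)
    qed
    moreover have "finite Bs" using Bs finite_subset by blast
    ultimately show ?thesis unfolding E_def by (intro sets.sets_Collect_finite_All) auto
  qed
  have ind_le: "indicator E \<omega> \<le> (\<Prod>t\<in>T. Y t \<omega>)" if "\<omega> \<in> space M" for \<omega>
  proof -
    have pr: "(\<Prod>t\<in>T. Y t \<omega>) = exp (\<Sum>t\<in>T. c t * Xt t \<omega>)"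
      by (simp add: Y_def exp_sum fin)
    show ?thesis
    proof (cases "\<omega> \<in> E")
      case True
      then have "0 \<le> (\<Sum>b\<in>Bs. s b * (sample_mean (Nn (ib b) b) (\<lambda>r. X (ib b) b r \<omega>)
             - sample_mean (Nn (sel b) b) (\<lambda>r. X (sel b) b r \<omega>)))"
        unfolding E_def using s by (intro sum_nonneg mult_nonneg_nonneg) auto
      then show ?thesis using True pr sumX[of \<omega>] by simp
    next
      case False
      then show ?thesis using pr by simp
    qed
  qed
  have intprod: "integrable M (\<lambda>\<omega>. \<Prod>t\<in>T. Y t \<omega>)"
    using indep_vars_integrable[OF fin indY] mgf by blast
  have "measure M E = (\<integral>\<omega>. indicator E \<omega> \<partial>M)"
    using Emeas sets.sets_into_space[OF Emeas] by (simp add: Int_absorb2)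
  also have "\<dots> \<le> (\<integral>\<omega>. (\<Prod>t\<in>T. Y t \<omega>) \<partial>M)"
    using Emeas ind_le intprod
    by (intro integral_mono integrable_real_indicator) (auto simp: less_top[symmetric])
  also have "\<dots> = (\<Prod>t\<in>T. \<integral>\<omega>. Y t \<omega> \<partial>M)"
    using indep_vars_lebesgue_integral[OF fin indY] mgf by blast
  also have "\<dots> = (\<Prod>t\<in>T. exp (c t * (\<lambda>(i,b,r). y i b) t + (c t)^2 * ((\<lambda>(i,b,r). lam i b) t)^2/2))"
    using mgf by (intro prod.cong) auto
  also have "\<dots> = exp (\<Sum>t\<in>T. c t * (\<lambda>(i,b,r). y i b) t + (c t)^2 * ((\<lambda>(i,b,r). lam i b) t)^2/2)"
    by (simp add: exp_sum fin)
  finally show ?thesis unfolding E_def sumY .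
qed

lemma Ev_meas:
  fixes M :: "'a measure" and X :: "nat \<Rightarrow> nat \<Rightarrow> nat \<Rightarrow> 'a \<Rightarrow> real"
  assumes X_distr: "\<forall>i<k. \<forall>b<B. \<forall>r. distributed M lborel (X i b r) (normal_density (y i b) (lam i b))"
   and Bs: "Bs \<subseteq> {..<B}" and sel: "\<forall>b\<in>Bs. sel b < k \<and> ib b < k"
  shows "{\<omega>\<in>space M. \<forall>b\<in>Bs. sample_mean (Nn (sel b) b) (\<lambda>r. X (sel b) b r \<omega>)
                                     \<le> sample_mean (Nn (ib b) b) (\<lambda>r. X (ib b) b r \<omega>)} \<in> sets M"
proof -
  have meas: "X i b r \<in> borel_measurable M" if "i < k" "b < B" for i b r
    using X_distr that distributed_measurable by (metis measurable_lborel1)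
  have "{\<omega> \<in> space M. sample_mean (Nn (sel b) b) (\<lambda>r. X (sel b) b r \<omega>)
                                   \<le> sample_mean (Nn (ib b) b) (\<lambda>r. X (ib b) b r \<omega>)} \<in> sets M"
    if "b \<in> Bs" for b
  proof -
    have m1: "X (sel b) b r \<in> borel_measurable M" "X (ib b) b r \<in> borel_measurable M" for r
      using meas sel Bs that by auto
    show ?thesis unfolding sample_mean_def
      by (intro borel_measurable_le borel_measurable_divide borel_measurable_sum m1 borel_measurable_const)
  qed
  moreover have "finite Bs" using Bs finite_subset by blast
  ultimately show ?thesis by (intro sets.sets_Collect_finite_All) auto
qed

lemma chernoff2:
  fixes M :: "'a measure" and X :: "nat \<Rightarrow> nat \<Rightarrow> nat \<Rightarrow> 'a \<Rightarrow> real" and Nn :: "nat \<Rightarrow> nat \<Rightarrow> nat"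
    and y lam :: "nat \<Rightarrow> nat \<Rightarrow> real" and sel ib :: "nat \<Rightarrow> nat"
  assumes P: "prob_space M"
   and lam_pos: "\<forall>i<k. \<forall>b<B. lam i b > 0"
   and X_distr: "\<forall>i<k. \<forall>b<B. \<forall>r. distributed M lborel (X i b r) (normal_density (y i b) (lam i b))"
   and X_indep: "prob_space.indep_vars M (\<lambda>_. borel) (\<lambda>(i, b, r). X i b r) ({..<k} \<times> {..<B} \<times> UNIV)"
   and Npos: "\<forall>i<k. \<forall>b<B. 0 < Nn i b" and NR: "\<forall>i<k. \<forall>b<B. Nn i b \<le> R"
   and Bs: "Bs \<subseteq> {..<B}" and sel: "\<forall>b\<in>Bs. sel b < k \<and> ib b < k \<and> sel b \<noteq> ib b"
   and gap: "\<forall>b\<in>Bs. y (ib b) b \<le> y (sel b) b"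
  shows "measure M {\<omega>\<in>space M. \<forall>b\<in>Bs. sample_mean (Nn (sel b) b) (\<lambda>r. X (sel b) b r \<omega>)
                                     \<le> sample_mean (Nn (ib b) b) (\<lambda>r. X (ib b) b r \<omega>)}
     \<le> exp (- (\<Sum>b\<in>Bs. (y (sel b) b - y (ib b) b)^2 /
            (2 * ((lam (sel b) b)^2 / Nn (sel b) b + (lam (ib b) b)^2 / Nn (ib b) b))))"
proof -
  define v where "v b = (lam (sel b) b)^2 / Nn (sel b) b + (lam (ib b) b)^2 / Nn (ib b) b" for b
  define s where "s b = (y (sel b) b - y (ib b) b) / v b" for b
  have vpos: "v b > 0" if "b \<in> Bs" for b
  proof -
    have "sel b < k" "ib b < k" "b < B" using sel Bs that by auto
    then have "lam (sel b) b > 0" "Nn (sel b) b > 0" "lam (ib b) b > 0" "Nn (ib b) b > 0"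
      using lam_pos Npos by auto
    then show ?thesis unfolding v_def by (intro add_pos_pos divide_pos_pos) auto
  qed
  have s: "\<forall>b\<in>Bs. 0 \<le> s b" using vpos gap unfolding s_def by (auto intro!: divide_nonneg_pos)
  have "(\<Sum>b\<in>Bs. s b * (y (ib b) b - y (sel b) b)
             + (s b)^2 * ((lam (sel b) b)^2 / Nn (sel b) b + (lam (ib b) b)^2 / Nn (ib b) b) / 2)
     = - (\<Sum>b\<in>Bs. (y (sel b) b - y (ib b) b)^2 /
            (2 * ((lam (sel b) b)^2 / Nn (sel b) b + (lam (ib b) b)^2 / Nn (ib b) b)))"
    unfolding sum_negf[symmetric]
  proof (intro sum.cong refl)
    fix b assume "b \<in> Bs"
    then have "v b > 0" by (rule vpos)
    then show "s b * (y (ib b) b - y (sel b) b)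
             + (s b)^2 * ((lam (sel b) b)^2 / Nn (sel b) b + (lam (ib b) b)^2 / Nn (ib b) b) / 2
       = - ((y (sel b) b - y (ib b) b)^2 /
            (2 * ((lam (sel b) b)^2 / Nn (sel b) b + (lam (ib b) b)^2 / Nn (ib b) b)))"
      unfolding v_def[symmetric] s_def by (simp add: field_simps power2_eq_square)
  qed
  with chernoff[OF P lam_pos X_distr X_indep Npos NR Bs sel s] show ?thesis by simp
qed

lemma emp_best_prop:
  assumes "0 < k" shows "emp_best k mu < k \<and> (\<forall>j<k. mu (emp_best k mu) \<le> mu j)"
proof -
  have ne: "mu ` {..<k} \<noteq> {}" using assms by auto
  obtain m where m: "m < k" "mu m = Min (mu ` {..<k})"
    using Min_in[OF _ ne] by auto
  have "\<forall>j<k. mu m \<le> mu j" using m by (auto intro: Min_le)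
  with m have ex: "\<exists>i. i < k \<and> (\<forall>j<k. mu i \<le> mu j)" by blast
  show ?thesis unfolding emp_best_def using LeastI_ex[OF ex] by blast
qed

lemma target_le:
  fixes p :: "nat \<Rightarrow> real" and sel :: "nat \<Rightarrow> nat"
  assumes istar: "istar < k"
    and sel: "sel \<in> {..<B} \<rightarrow>\<^sub>E {..<k}" and j: "j < k" "j \<noteq> istar"
    and cnt: "(\<Sum>b<B. p b * of_bool (istar = sel b)) \<le> (\<Sum>b<B. p b * of_bool (j = sel b))"
  shows "Min ((\<lambda>j. LDRj k B p y lam alpha ib istar j) ` ({..<k} - {istar}))
     \<le> (\<Sum>b\<in>{b. b < B \<and> sel b \<noteq> ib b}. Grate y lam alpha ib (sel b) b)"
proof -
  define Mx where "Mx i b = (i < k \<and> b < B \<and> i = sel b)" for i b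
  have selk: "sel b < k" if "b < B" for b using sel that by auto
  have Mcal: "Mx \<in> calM k B" unfolding calM_def Mx_def using selk by auto
  have "dgap p B istar j Mx \<le> 0"
  proof -
    have "(\<Sum>b<B. p b * of_bool (Mx istar b)) = (\<Sum>b<B. p b * of_bool (istar = sel b))"
      unfolding Mx_def using istar by (intro sum.cong) auto
    moreover have "(\<Sum>b<B. p b * of_bool (Mx j b)) = (\<Sum>b<B. p b * of_bool (j = sel b))"
      unfolding Mx_def using j by (intro sum.cong) auto
    ultimately show ?thesis unfolding dgap_def using cnt by simp
  qed
  with Mcal have MA: "Mx \<in> calA k B p istar j" unfolding calA_def by auto
  define f where "f = (\<lambda>Mx. \<Sum>(i, b)\<in>Iset k B ib Mx. Grate y lam alpha ib i b)"
  have fin: "finite (f ` calA k B p istar j)"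
  proof (rule finite_subset)
    show "f ` calA k B p istar j \<subseteq> (\<lambda>S. \<Sum>(i, b)\<in>S. Grate y lam alpha ib i b) ` Pow ({..<k} \<times> {..<B})"
      unfolding f_def Iset_def by auto
  qed auto
  have Iset_eq: "Iset k B ib Mx = (\<lambda>b. (sel b, b)) ` {b. b < B \<and> sel b \<noteq> ib b}"
    unfolding Iset_def Mx_def using selk by auto
  have "f Mx = (\<Sum>b\<in>{b. b < B \<and> sel b \<noteq> ib b}. Grate y lam alpha ib (sel b) b)"
    unfolding f_def Iset_eq by (subst sum.reindex) (auto simp: inj_on_def)
  moreover have "LDRj k B p y lam alpha ib istar j \<le> f Mx"
    unfolding LDRj_def f_def[symmetric] using fin MA by (intro Min_le) auto
  moreover have "Min ((\<lambda>j. LDRj k B p y lam alpha ib istar j) ` ({..<k} - {istar}))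
      \<le> LDRj k B p y lam alpha ib istar j"
    using j by (intro Min_le) auto
  ultimately show ?thesis by linarith
qed

lemma h_eventually:
  fixes N :: "nat \<Rightarrow> nat \<Rightarrow> nat \<Rightarrow> nat" and y lam alpha :: "nat \<Rightarrow> nat \<Rightarrow> real" and ib :: "nat \<Rightarrow> nat"
  assumes lam_pos: "\<forall>i<k. \<forall>b<B. lam i b > 0"
    and ib_lt: "\<forall>b<B. ib b < k"
    and alpha_nonneg: "\<forall>i<k. \<forall>b<B. alpha i b \<ge> 0"
    and N_frac: "\<forall>i<k. \<forall>b<B. (\<lambda>n. real (N n i b) / real n) \<longlonglongrightarrow> alpha i b"
    and eta: "\<eta> > 0"
  shows "eventually (\<lambda>n. \<forall>i<k. \<forall>b<B. i \<noteq> ib b \<longrightarrow> Grate y lam alpha ib i b - \<eta> \<le>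
     (y i b - y (ib b) b)^2 / (2 * ((lam i b)^2 / (real (N n i b) / real n)
                                   + (lam (ib b) b)^2 / (real (N n (ib b) b) / real n)))) sequentially"
proof -
  have one: "eventually (\<lambda>n. i \<noteq> ib b \<longrightarrow> Grate y lam alpha ib i b - \<eta> \<le>
     (y i b - y (ib b) b)^2 / (2 * ((lam i b)^2 / (real (N n i b) / real n)
                                   + (lam (ib b) b)^2 / (real (N n (ib b) b) / real n)))) sequentially"
    if ibk: "(i, b) \<in> {..<k} \<times> {..<B}" for i b
  proof -
    have i: "i < k" "b < B" using ibk by auto
    have j: "ib b < k" using ib_lt i by auto
    have nonneg: "0 \<le> (y i b - y (ib b) b)^2 / (2 * ((lam i b)^2 / (real (N n i b) / real n)
                                   + (lam (ib b) b)^2 / (real (N n (ib b) b) / real n)))" for n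
      by (intro divide_nonneg_nonneg mult_nonneg_nonneg add_nonneg_nonneg) auto
    show ?thesis
    proof (cases "alpha i b = 0 \<or> alpha (ib b) b = 0")
      case True
      then have "Grate y lam alpha ib i b = 0" unfolding Grate_def by simp
      have "Grate y lam alpha ib i b - \<eta> \<le> (y i b - y (ib b) b)^2 / (2 * ((lam i b)^2 / (real (N n i b) / real n)
                                   + (lam (ib b) b)^2 / (real (N n (ib b) b) / real n)))" for n
        using nonneg[of n] eta \<open>Grate y lam alpha ib i b = 0\<close> by linarith
      then show ?thesis by (intro always_eventually) auto
    next
      case False
      then have a1: "alpha i b > 0" and a2: "alpha (ib b) b > 0" using alpha_nonneg i j by force+
      have l1: "lam i b > 0" and l2: "lam (ib b) b > 0" using lam_pos i j by auto
      have t1: "(\<lambda>n. real (N n i b) / real n) \<longlonglongrightarrow> alpha i b" and t2: "(\<lambda>n. real (N n (ib b) b) / real n) \<longlonglongrightarrow> alpha (ib b) b"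
        using N_frac i j by auto
      have den: "2 * ((lam i b)^2 / alpha i b + (lam (ib b) b)^2 / alpha (ib b) b) \<noteq> 0"
        using a1 a2 l1 l2 by (smt (verit) divide_pos_pos zero_less_power)
      have lim: "(\<lambda>n. (y i b - y (ib b) b)^2 / (2 * ((lam i b)^2 / (real (N n i b) / real n)
                                   + (lam (ib b) b)^2 / (real (N n (ib b) b) / real n))))
          \<longlonglongrightarrow> Grate y lam alpha ib i b"
      proof -
        have "(\<lambda>n. 2 * ((lam i b)^2 / (real (N n i b) / real n)
                                   + (lam (ib b) b)^2 / (real (N n (ib b) b) / real n)))
             \<longlonglongrightarrow> 2 * ((lam i b)^2 / alpha i b + (lam (ib b) b)^2 / alpha (ib b) b)"
          using a1 a2 by (intro tendsto_mult tendsto_add tendsto_divide tendsto_const t1 t2) auto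
        from tendsto_divide[OF tendsto_const this den, of "(y i b - y (ib b) b)^2"]
        show ?thesis unfolding Grate_def using False by simp
      qed
      have "Grate y lam alpha ib i b - \<eta> < Grate y lam alpha ib i b" using eta by simp
      from order_tendstoD(1)[OF lim this] show ?thesis by (rule eventually_mono) auto
    qed
  qed
  have "eventually (\<lambda>n. \<forall>(i,b)\<in>{..<k} \<times> {..<B}. i \<noteq> ib b \<longrightarrow> Grate y lam alpha ib i b - \<eta> \<le>
     (y i b - y (ib b) b)^2 / (2 * ((lam i b)^2 / (real (N n i b) / real n)
                                   + (lam (ib b) b)^2 / (real (N n (ib b) b) / real n)))) sequentially"
    using one by (intro eventually_ball_finite) auto
  then show ?thesis by (rule eventually_mono) auto
qed

theorem theorem1:
  fixes M :: "'a measure"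
    and k B :: nat
    and p :: "nat \<Rightarrow> real"
    and y lam alpha :: "nat \<Rightarrow> nat \<Rightarrow> real"
    and ib :: "nat \<Rightarrow> nat"
    and istar :: nat
    and X :: "nat \<Rightarrow> nat \<Rightarrow> nat \<Rightarrow> 'a \<Rightarrow> real"
    and N :: "nat \<Rightarrow> nat \<Rightarrow> nat \<Rightarrow> nat"
  assumes k2: "k \<ge> 2"
    and p_nonneg: "\<forall>b<B. p b \<ge> 0"
    and p_sum: "(\<Sum>b<B. p b) = 1"
    and lam_pos: "\<forall>i<k. \<forall>b<B. lam i b > 0"
    and ib_best: "\<forall>b<B. ib b < k \<and> (\<forall>j<k. j \<noteq> ib b \<longrightarrow> y (ib b) b < y j b)"
    and istar_mpb: "istar < k \<and> (\<forall>j<k. j \<noteq> istar \<longrightarrow>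
          (\<Sum>b<B. p b * of_bool (j = ib b)) < (\<Sum>b<B. p b * of_bool (istar = ib b)))"
    and alpha_nonneg: "\<forall>i<k. \<forall>b<B. alpha i b \<ge> 0"
    and alpha_sum: "(\<Sum>i<k. \<Sum>b<B. alpha i b) = 1"
    and prob: "prob_space M"
    and X_distr: "\<forall>i<k. \<forall>b<B. \<forall>r. distributed M lborel (X i b r) (normal_density (y i b) (lam i b))"
    and X_indep: "prob_space.indep_vars M (\<lambda>_. borel) (\<lambda>(i, b, r). X i b r) ({..<k} \<times> {..<B} \<times> UNIV)"
    and N_budget: "\<forall>n. (\<Sum>i<k. \<Sum>b<B. N n i b) = n"
    and N_frac: "\<forall>i<k. \<forall>b<B. (\<lambda>n. real (N n i b) / real n) \<longlonglongrightarrow> alpha i b"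
    and N_inf: "\<forall>i<k. \<forall>b<B. filterlim (\<lambda>n. N n i b) at_top sequentially"
  shows "Liminf sequentially (\<lambda>n. exp_rate n (measure M
            {\<omega> \<in> space M. emp_mpb k B p (\<lambda>i b. sample_mean (N n i b) (\<lambda>r. X i b r \<omega>)) \<noteq> {istar}}))
         \<ge> ereal (Min ((\<lambda>j. LDRj k B p y lam alpha ib istar j) ` ({..<k} - {istar})))"
proof -
  interpret prob_space M by (rule prob)
  define L where "L = Min ((\<lambda>j. LDRj k B p y lam alpha ib istar j) ` ({..<k} - {istar}))"
  define Fam where "Fam = {sel \<in> {..<B} \<rightarrow>\<^sub>E {..<k}. \<exists>j<k. j \<noteq> istar \<and>
      (\<Sum>b<B. p b * of_bool (istar = sel b)) \<le> (\<Sum>b<B. p b * of_bool (j = sel b))}"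
  define Bs where "Bs sel = {b. b < B \<and> sel b \<noteq> ib b}" for sel :: "nat \<Rightarrow> nat"
  define Ev where "Ev n sel = {\<omega>\<in>space M. \<forall>b\<in>Bs sel. sample_mean (N n (sel b) b) (\<lambda>r. X (sel b) b r \<omega>)
                                     \<le> sample_mean (N n (ib b) b) (\<lambda>r. X (ib b) b r \<omega>)}" for n sel
  define E where "E n = {\<omega> \<in> space M. emp_mpb k B p (\<lambda>i b. sample_mean (N n i b) (\<lambda>r. X i b r \<omega>)) \<noteq> {istar}}" for n
  define h where "h n i b = (y i b - y (ib b) b)^2 / (2 * ((lam i b)^2 / (real (N n i b) / real n)
                                   + (lam (ib b) b)^2 / (real (N n (ib b) b) / real n)))" for n i b
  have kpos: "0 < k" using k2 by simp
  have istar: "istar < k" using istar_mpb by simp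
  have finFam: "finite Fam"
    by (rule finite_subset[of _ "{..<B} \<rightarrow>\<^sub>E {..<k}"]) (auto simp: Fam_def intro: finite_PiE)
  have BsB: "Bs sel \<subseteq> {..<B}" for sel unfolding Bs_def by auto
  have selFam: "sel b < k" if "sel \<in> Fam" "b < B" for sel b using that unfolding Fam_def by auto
  have Lle: "L \<le> (\<Sum>b\<in>Bs sel. Grate y lam alpha ib (sel b) b)" if "sel \<in> Fam" for sel
  proof -
    from that obtain j where "sel \<in> {..<B} \<rightarrow>\<^sub>E {..<k}" "j < k" "j \<noteq> istar"
      "(\<Sum>b<B. p b * of_bool (istar = sel b)) \<le> (\<Sum>b<B. p b * of_bool (j = sel b))"
      unfolding Fam_def by auto
    from target_le[OF istar this, of y lam alpha ib] show ?thesis unfolding L_def Bs_def .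
  qed
  have Evmeas: "Ev n sel \<in> sets M" if "sel \<in> Fam" for n sel
    unfolding Ev_def
    by (rule Ev_meas[OF X_distr BsB]) (use that selFam ib_best in \<open>auto simp: Bs_def\<close>)
  have sub: "E n \<subseteq> (\<Union>sel\<in>Fam. Ev n sel)" for n
  proof
    fix \<omega> assume w: "\<omega> \<in> E n"
    define mu where "mu = (\<lambda>i b. sample_mean (N n i b) (\<lambda>r. X i b r \<omega>))"
    define sel where "sel = restrict (\<lambda>b. emp_best k (\<lambda>l. mu l b)) {..<B}"
    have eb: "emp_best k (\<lambda>l. mu l b) < k \<and> (\<forall>j<k. mu (emp_best k (\<lambda>l. mu l b)) b \<le> mu j b)" for b
      using emp_best_prop[OF kpos, of "\<lambda>l. mu l b"] by simp
    define cnt where "cnt i = (\<Sum>b<B. p b * of_bool (i = emp_best k (\<lambda>l. mu l b)))" for i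
    have cnt_sel: "(\<Sum>b<B. p b * of_bool (i = sel b)) = cnt i" for i
      unfolding cnt_def sel_def by (intro sum.cong) auto
    have wc: "\<omega> \<in> space M \<and> emp_mpb k B p mu \<noteq> {istar}"
      using w unfolding E_def mu_def by (rule CollectD)
    have ws: "\<omega> \<in> space M" using wc by (rule conjunct1)
    have mpb: "emp_mpb k B p mu \<noteq> {istar}" using wc by (rule conjunct2)
    have "\<exists>j<k. j \<noteq> istar \<and> cnt istar \<le> cnt j"
    proof (cases "istar \<in> emp_mpb k B p mu")
      case True
      have "\<exists>j. j \<in> emp_mpb k B p mu \<and> j \<noteq> istar"
      proof (rule ccontr)
        assume "\<not> (\<exists>j. j \<in> emp_mpb k B p mu \<and> j \<noteq> istar)"
        then have "emp_mpb k B p mu \<subseteq> {istar}" by blast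
        with True have "emp_mpb k B p mu = {istar}" by (intro antisym) simp_all
        with mpb show False by (rule notE)
      qed
      then obtain j where j1: "j \<in> emp_mpb k B p mu" and j2: "j \<noteq> istar" by (elim exE conjE)
      have "j < k \<and> (\<forall>j'<k. cnt j' \<le> cnt j)"
        using j1 unfolding emp_mpb_def cnt_def by (simp only: mem_Collect_eq, blast)
      then show ?thesis using istar j2 by blast
    next
      case False
      have "\<not> (istar < k \<and> (\<forall>j<k. cnt j \<le> cnt istar))"
        using False unfolding emp_mpb_def cnt_def by (simp only: mem_Collect_eq) blast
      then obtain j where "j < k" "\<not> cnt j \<le> cnt istar"
        using istar by blast
      then show ?thesis by (intro exI[of _ j]) auto
    qed
    moreover have "sel \<in> {..<B} \<rightarrow>\<^sub>E {..<k}" using eb by (auto simp: sel_def)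
    ultimately obtain j where jj: "j < k" "j \<noteq> istar" "cnt istar \<le> cnt j"
      and selP: "sel \<in> {..<B} \<rightarrow>\<^sub>E {..<k}" by blast
    have "sel \<in> {..<B} \<rightarrow>\<^sub>E {..<k} \<and> (\<exists>j<k. j \<noteq> istar \<and>
      (\<Sum>b<B. p b * of_bool (istar = sel b)) \<le> (\<Sum>b<B. p b * of_bool (j = sel b)))"
      unfolding cnt_sel using jj selP by blast
    then have selF: "sel \<in> Fam" unfolding Fam_def by (simp only: mem_Collect_eq)
    have "mu (sel b) b \<le> mu (ib b) b" if b: "b \<in> Bs sel" for b
    proof -
      have bB: "b < B" using b unfolding Bs_def by simp
      then have "sel b = emp_best k (\<lambda>l. mu l b)" unfolding sel_def by simp
      moreover have "ib b < k" using ib_best bB by simp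
      ultimately show ?thesis using eb[of b] by simp
    qed
    then have "\<forall>b\<in>Bs sel. sample_mean (N n (sel b) b) (\<lambda>r. X (sel b) b r \<omega>)
                                     \<le> sample_mean (N n (ib b) b) (\<lambda>r. X (ib b) b r \<omega>)"
      unfolding mu_def by blast
    then have "\<omega> \<in> Ev n sel" unfolding Ev_def using ws by (intro CollectI conjI)
    with selF show "\<omega> \<in> (\<Union>sel\<in>Fam. Ev n sel)" by blast
  qed
  have Pbound: "measure M (E n) \<le> (\<Sum>sel\<in>Fam. measure M (Ev n sel))" for n
  proof -
    have "measure M (E n) \<le> measure M (\<Union>sel\<in>Fam. Ev n sel)"
      using sub Evmeas finFam by (intro finite_measure_mono) auto
    also have "\<dots> \<le> (\<Sum>sel\<in>Fam. measure M (Ev n sel))"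
      using Evmeas finFam by (intro finite_measure_subadditive_finite) auto
    finally show ?thesis .
  qed
  have Nle: "N n i b \<le> n" if "i < k" "b < B" for n i b
  proof -
    have "N n i b \<le> (\<Sum>b<B. N n i b)" using that by (intro member_le_sum) auto
    also have "\<dots> \<le> (\<Sum>i<k. \<Sum>b<B. N n i b)" using that by (intro member_le_sum[of i "{..<k}" "\<lambda>i. \<Sum>b<B. N n i b"]) auto
    finally show ?thesis using N_budget by simp
  qed
  have evN: "eventually (\<lambda>n. \<forall>(i,b)\<in>{..<k}\<times>{..<B}. 0 < N n i b) sequentially"
  proof (intro eventually_ball_finite ballI)
    fix t assume t: "t \<in> {..<k}\<times>{..<B}"
    obtain i b where "t = (i,b)" by (cases t)
    with t N_inf have "filterlim (\<lambda>n. N n i b) at_top sequentially" by auto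
    then have "eventually (\<lambda>n. 1 \<le> N n i b) sequentially" by (simp add: filterlim_at_top)
    then show "eventually (\<lambda>n. case t of (i,b) \<Rightarrow> 0 < N n i b) sequentially"
      using \<open>t = (i,b)\<close> by (auto elim: eventually_mono)
  qed auto
  have key: "eventually (\<lambda>n. ereal r < exp_rate n (measure M (E n))) sequentially" if r: "r < L" for r
  proof -
    define \<delta> where "\<delta> = L - r"
    have dpos: "\<delta> > 0" using r unfolding \<delta>_def by simp
    define \<eta> where "\<eta> = \<delta> / (3 * (real B + 1))"
    have epos: "\<eta> > 0" using dpos unfolding \<eta>_def by simp
    have Beta: "real B * \<eta> \<le> \<delta> / 3"
      unfolding \<eta>_def using dpos by (simp add: field_simps)
    define C where "C = real (card Fam) + 1"
    have Cpos: "C > 0" unfolding C_def by simp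
    have lnC: "(\<lambda>n. ln C / real n) \<longlonglongrightarrow> 0"
      by (intro tendsto_divide_0[OF tendsto_const] filterlim_at_top_imp_at_infinity filterlim_real_sequentially)
    have ev1: "eventually (\<lambda>n. ln C / real n < \<delta> / 3) sequentially"
      using order_tendstoD(2)[OF lnC, of "\<delta>/3"] dpos by linarith
    have ev2: "eventually (\<lambda>n. \<forall>i<k. \<forall>b<B. i \<noteq> ib b \<longrightarrow> Grate y lam alpha ib i b - \<eta> \<le> h n i b) sequentially"
      unfolding h_def using ib_best by (intro h_eventually[OF lam_pos _ alpha_nonneg N_frac epos]) auto
    have ev3: "eventually (\<lambda>n. 0 < n) sequentially" by (rule eventually_gt_at_top)
    show ?thesis
      using eventually_conj[OF ev1 eventually_conj[OF ev2 eventually_conj[OF ev3 evN]]]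
    proof (rule eventually_mono, elim conjE)
      fix n assume c1: "ln C / real n < \<delta> / 3"
        and c2: "\<forall>i<k. \<forall>b<B. i \<noteq> ib b \<longrightarrow> Grate y lam alpha ib i b - \<eta> \<le> h n i b"
        and c3: "0 < n" and c4: "\<forall>(i,b)\<in>{..<k}\<times>{..<B}. 0 < N n i b"
      have Npos: "\<forall>i<k. \<forall>b<B. 0 < N n i b" using c4 by auto
      have NR: "\<forall>i<k. \<forall>b<B. N n i b \<le> n" using Nle by auto
      have bnd: "measure M (Ev n sel) \<le> exp (- (real n * (L - \<delta>/3)))" if sF: "sel \<in> Fam" for sel
      proof -
        have sel: "\<forall>b\<in>Bs sel. sel b < k \<and> ib b < k \<and> sel b \<noteq> ib b"
          using selFam[OF sF] ib_best unfolding Bs_def by auto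
        have gap: "\<forall>b\<in>Bs sel. y (ib b) b \<le> y (sel b) b"
          using sel ib_best BsB by (meson less_imp_le lessThan_iff subsetD)
        have m: "measure M (Ev n sel) \<le> exp (- (\<Sum>b\<in>Bs sel. (y (sel b) b - y (ib b) b)^2 /
            (2 * ((lam (sel b) b)^2 / N n (sel b) b + (lam (ib b) b)^2 / N n (ib b) b))))"
          unfolding Ev_def by (rule chernoff2[OF prob lam_pos X_distr X_indep Npos NR BsB sel gap])
        have eqh: "(\<Sum>b\<in>Bs sel. (y (sel b) b - y (ib b) b)^2 /
            (2 * ((lam (sel b) b)^2 / N n (sel b) b + (lam (ib b) b)^2 / N n (ib b) b)))
            = real n * (\<Sum>b\<in>Bs sel. h n (sel b) b)"
          unfolding sum_distrib_left
        proof (intro sum.cong refl)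
          fix b assume b: "b \<in> Bs sel"
          have bB: "b < B" "sel b < k" "ib b < k" using b sel BsB[of sel] by auto
          then have "N n (sel b) b > 0" "N n (ib b) b > 0" using Npos by auto
          then show "(y (sel b) b - y (ib b) b)^2 /
            (2 * ((lam (sel b) b)^2 / N n (sel b) b + (lam (ib b) b)^2 / N n (ib b) b))
            = real n * h n (sel b) b"
          proof -
            define D where "D = (lam (sel b) b)^2 / N n (sel b) b + (lam (ib b) b)^2 / N n (ib b) b"
            have "(lam (sel b) b)^2 / (real (N n (sel b) b) / real n)
                + (lam (ib b) b)^2 / (real (N n (ib b) b) / real n) = real n * D"
              unfolding D_def by (simp add: field_simps)
            then have "h n (sel b) b = (y (sel b) b - y (ib b) b)^2 / (2 * (real n * D))"
              unfolding h_def by simp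
            then show ?thesis unfolding D_def[symmetric] using c3 by (simp add: field_simps)
          qed
        qed
        have "(\<Sum>b\<in>Bs sel. Grate y lam alpha ib (sel b) b - \<eta>) \<le> (\<Sum>b\<in>Bs sel. h n (sel b) b)"
        proof (intro sum_mono)
          fix b assume b: "b \<in> Bs sel"
          have "b < B" "sel b < k" "sel b \<noteq> ib b" using b sel BsB[of sel] by auto
          then show "Grate y lam alpha ib (sel b) b - \<eta> \<le> h n (sel b) b" using c2 by blast
        qed
        moreover have "(\<Sum>b\<in>Bs sel. Grate y lam alpha ib (sel b) b - \<eta>)
            = (\<Sum>b\<in>Bs sel. Grate y lam alpha ib (sel b) b) - real (card (Bs sel)) * \<eta>"
          by (simp add: sum_subtractf)
        moreover have "real (card (Bs sel)) \<le> real B"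
          using card_mono[OF _ BsB[of sel]] by simp
        then have "real (card (Bs sel)) * \<eta> \<le> real B * \<eta>"
          using epos by (intro mult_right_mono) auto
        ultimately have "L - \<delta>/3 \<le> (\<Sum>b\<in>Bs sel. h n (sel b) b)"
          using Lle[OF sF] Beta by linarith
        then have "real n * (L - \<delta>/3) \<le> real n * (\<Sum>b\<in>Bs sel. h n (sel b) b)"
          by (intro mult_left_mono) auto
        then have "exp (- (\<Sum>b\<in>Bs sel. (y (sel b) b - y (ib b) b)^2 /
            (2 * ((lam (sel b) b)^2 / N n (sel b) b + (lam (ib b) b)^2 / N n (ib b) b))))
            \<le> exp (- (real n * (L - \<delta>/3)))"
          unfolding eqh by simp
        with m show ?thesis by (rule order.trans)
      qed
      have PC: "measure M (E n) \<le> C * exp (- (real n * (L - \<delta>/3)))"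
      proof -
        have "measure M (E n) \<le> (\<Sum>sel\<in>Fam. exp (- (real n * (L - \<delta>/3))))"
          using Pbound[of n] sum_mono[of Fam "\<lambda>sel. measure M (Ev n sel)", OF bnd]
          by (rule order.trans)
        also have "\<dots> = real (card Fam) * exp (- (real n * (L - \<delta>/3)))" by simp
        also have "\<dots> \<le> C * exp (- (real n * (L - \<delta>/3)))" unfolding C_def by (intro mult_right_mono) auto
        finally show ?thesis .
      qed
      show "ereal r < exp_rate n (measure M (E n))"
      proof (cases "measure M (E n) = 0")
        case True
        then show ?thesis unfolding exp_rate_def by simp
      next
        case False
        then have Ppos: "measure M (E n) > 0" using measure_nonneg[of M "E n"] by linarith
        have "ln (measure M (E n)) \<le> ln (C * exp (- (real n * (L - \<delta>/3))))"
          using PC Ppos by (subst ln_le_cancel_iff) auto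
        also have "\<dots> = ln C - real n * (L - \<delta>/3)" using Cpos by (simp add: ln_mult)
        finally have lnP: "ln (measure M (E n)) \<le> ln C - real n * (L - \<delta>/3)" .
        have "r = L - \<delta>" unfolding \<delta>_def by simp
        then have "r < L - \<delta>/3 - ln C / real n" using c1 dpos by linarith
        also have "L - \<delta>/3 - ln C / real n = (real n * (L - \<delta>/3) - ln C) / real n"
          using c3 by (simp add: field_simps)
        also have "\<dots> \<le> - ln (measure M (E n)) / real n"
          using lnP c3 by (intro divide_right_mono) auto
        finally show ?thesis unfolding exp_rate_def using False by simp
      qed
    qed
  qed
  have "ereal L \<le> Liminf sequentially (\<lambda>n. exp_rate n (measure M (E n)))"
    unfolding le_Liminf_iff
  proof (intro allI impI)
    fix z assume z: "z < ereal L"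
    show "eventually (\<lambda>n. z < exp_rate n (measure M (E n))) sequentially"
    proof (cases z)
      case (real r)
      then show ?thesis using key[of r] z by simp
    next
      case PInf then show ?thesis using z by simp
    next
      case MInf
      have "eventually (\<lambda>n. ereal (L - 1) < exp_rate n (measure M (E n))) sequentially"
        by (rule key) simp
      then show ?thesis by (rule eventually_mono) (use MInf in auto)
    qed
  qed
  then show ?thesis unfolding L_def E_def by simp
qed

end
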